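(* The reachability problem for probabilistic open channel systems is undecidable: there is no algorithm that, given a pOCS $\mathcal S$ and two configurations $(q_0,\nu_0)$ and $(q_f,\nu_f)$, decides whether $(q_f,\nu_f)$ is reachable from $(q_0,\nu_0)$.
   Context: For an alphabet $\Sigma$, $\lambda$ is the empty word and $\Sigma_\lambda=\Sigma\cup\{\lambda\}$. A probabilistic open channel system (pOCS) $\mathcal S=(Q,Ch,\Sigma,\Delta,W)$ has a finite set $Q$ of states, a finite set $Ch$ of channels containing a distinguished input channel $c_{in}$, a finite alphabet $\Sigma$ containing a letter $\$$, a transition relation $\Delta\subseteq Q\times Ch\times\Sigma_\lambda\times Ch\times\Sigma_\lambda\times Q$ such that (1) for all $q\in Q$, $(q,c_{in},\lambda,c_{in},\$,q)\in\Delta$; (2) for all $(q,c,a,c',a',q')\in\Delta$, $a=\lambda$ implies $a'=\$$ and $c=c'=c_{in}$; (3) for all $(q,c,a,c',a',q')\in\Delta$, $c\neq c_{in}$ implies $c'\neq c_{in}$; and a weight function $W:\Delta\times(\Sigma^* )^{Ch}\to\mathbb{Q}_{>0}$. A configuration is $(q,\nu)$ with $q\in Q$, $\nu:Ch\to\Sigma^*$. A transition $t=(q,c,a,c',a',q')$ is enabled in $(q,\nu)$ if $\nu(c)=aw$ for some $w$; its firing leads to $(q',\nu')$ where, if $c=c'$, $\nu'(c)=wa'$ and $\nu'$ agrees with $\nu$ elsewhere; if $c\neq c'$, $\nu'(c)=w$, $\nu'(c')=\nu(c')a'$ and $\nu'$ agrees with $\nu$ elsewhere. Reachability is via finite sequences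 of firings (weights are irrelevant for reachability). *)

theory Defs
  imports Complex_Main "HOL-Library.Nat_Bijection"
begin

datatype recf =
    Z
  | S
  | Id nat nat
  | Cn nat recf "recf list"
  | Pr nat recf recf
  | Mn nat recf

inductive eval :: "recf \<Rightarrow> nat list \<Rightarrow> nat \<Rightarrow> bool" where
  eval_Z:  "eval Z xs 0"
| eval_S:  "eval S [x] (Suc x)"
| eval_Id: "i < n \<Longrightarrow> length xs = n \<Longrightarrow> eval (Id n i) xs (xs ! i)"
| eval_Cn: "length xs = n \<Longrightarrow> length gs = length ys \<Longrightarrow>
            (\<forall>i < length gs. eval (gs ! i) xs (ys ! i)) \<Longrightarrow> eval f ys y \<Longrightarrow>
            eval (Cn n f gs) xs y"
| eval_Pr0: "length xs = n \<Longrightarrow> eval g xs y \<Longrightarrow> eval (Pr n g h) (0 # xs) y"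
| eval_PrS: "eval (Pr n g h) (k # xs) r \<Longrightarrow> eval h (k # r # xs) y \<Longrightarrow>
             eval (Pr n g h) (Suc k # xs) y"
| eval_Mn: "length xs = n \<Longrightarrow> eval f (z # xs) 0 \<Longrightarrow>
            (\<forall>y < z. \<exists>v. 0 < v \<and> eval f (y # xs) v) \<Longrightarrow> eval (Mn n f) xs z"

text \<open>States, channels and letters are natural numbers; the empty word \<lambda> in
  \<Sigma>_\<lambda> is represented by None, a letter a by Some a.  A transition
  (q, c, a, c', a', q') is a 6-tuple.\<close>

type_synonym trans = "nat \<times> nat \<times> nat option \<times> nat \<times> nat option \<times> nat"
type_synonym valuation = "nat \<Rightarrow> nat list"

definition is_pOCS ::
  "nat set \<Rightarrow> nat set \<Rightarrow> nat \<Rightarrow> nat set \<Rightarrow> nat \<Rightarrow> trans set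
   \<Rightarrow> (trans \<Rightarrow> valuation \<Rightarrow> rat) \<Rightarrow> bool" where
  "is_pOCS Q Ch cin Sig dol Delta W \<longleftrightarrow>
     finite Q \<and> finite Ch \<and> cin \<in> Ch \<and> finite Sig \<and> dol \<in> Sig \<and>
     Delta \<subseteq> Q \<times> Ch \<times> (insert None (Some ` Sig)) \<times> Ch \<times> (insert None (Some ` Sig)) \<times> Q \<and>
     (\<forall>q \<in> Q. (q, cin, None, cin, Some dol, q) \<in> Delta) \<and>
     (\<forall>(q, c, a, c', a', q') \<in> Delta. a = None \<longrightarrow> a' = Some dol \<and> c = cin \<and> c' = cin) \<and>
     (\<forall>(q, c, a, c', a', q') \<in> Delta. c \<noteq> cin \<longrightarrow> c' \<noteq> cin) \<and>
     (\<forall>t \<in> Delta. \<forall>\<nu>. (\<forall>c. set (\<nu> c) \<subseteq> Sig) \<longrightarrow> W t \<nu> > 0)"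

definition is_config :: "nat set \<Rightarrow> nat set \<Rightarrow> nat set \<Rightarrow> nat \<times> valuation \<Rightarrow> bool" where
  "is_config Q Ch Sig C \<longleftrightarrow>
     fst C \<in> Q \<and> (\<forall>c \<in> Ch. set (snd C c) \<subseteq> Sig) \<and> (\<forall>c. c \<notin> Ch \<longrightarrow> snd C c = [])"

fun opt_word :: "nat option \<Rightarrow> nat list" where
  "opt_word None = []"
| "opt_word (Some a) = [a]"

definition step :: "trans set \<Rightarrow> nat \<times> valuation \<Rightarrow> nat \<times> valuation \<Rightarrow> bool" where
  "step Delta C C' \<longleftrightarrow>
     (\<exists>c a c' a' w. (fst C, c, a, c', a', fst C') \<in> Delta \<and>
        snd C c = opt_word a @ w \<and>
        snd C' = (if c = c' then (snd C)(c := w @ opt_word a')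
                  else (snd C)(c := w, c' := snd C c' @ opt_word a')))"

definition reachable :: "trans set \<Rightarrow> nat \<times> valuation \<Rightarrow> nat \<times> valuation \<Rightarrow> bool" where
  "reachable Delta C C' \<longleftrightarrow> (step Delta)\<^sup>*\<^sup>* C C'"

definition enc_set :: "nat set \<Rightarrow> nat" where
  "enc_set A = list_encode (sorted_list_of_set A)"

fun enc_opt :: "nat option \<Rightarrow> nat" where
  "enc_opt None = 0"
| "enc_opt (Some a) = Suc a"

fun enc_trans :: "trans \<Rightarrow> nat" where
  "enc_trans (q, c, a, c', a', q') = list_encode [q, c, enc_opt a, c', enc_opt a', q']"

definition enc_delta :: "trans set \<Rightarrow> nat" where
  "enc_delta Delta = enc_set (enc_trans ` Delta)"

definition enc_val :: "nat set \<Rightarrow> valuation \<Rightarrow> nat" where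
  "enc_val Ch \<nu> = list_encode (map (\<lambda>c. list_encode (\<nu> c)) (sorted_list_of_set Ch))"

definition enc_instance ::
  "nat set \<Rightarrow> nat set \<Rightarrow> nat \<Rightarrow> nat set \<Rightarrow> nat \<Rightarrow> trans set
   \<Rightarrow> nat \<times> valuation \<Rightarrow> nat \<times> valuation \<Rightarrow> nat" where
  "enc_instance Q Ch cin Sig dol Delta C0 Cf =
     list_encode [enc_set Q, enc_set Ch, cin, enc_set Sig, dol, enc_delta Delta,
                  fst C0, enc_val Ch (snd C0), fst Cf, enc_val Ch (snd Cf)]"

definition decides_pOCS_reach :: "recf \<Rightarrow> bool" where
  "decides_pOCS_reach f \<longleftrightarrow>
     (\<forall>Q Ch cin Sig dol Delta W C0 Cf.
        is_pOCS Q Ch cin Sig dol Delta W \<longrightarrow> is_config Q Ch Sig C0 \<longrightarrow> is_config Q Ch Sig Cf \<longrightarrow>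
        eval f [enc_instance Q Ch cin Sig dol Delta C0 Cf]
             (if reachable Delta C0 Cf then 1 else 0))"

end

theory Submission
  imports Defs
begin

lemma eval_Cn1: "eval g xs u \<Longrightarrow> eval f [u] y \<Longrightarrow> length xs = n \<Longrightarrow> eval (Cn n f [g]) xs y"
  by (rule eval_Cn[where ys="[u]"]) auto

lemma eval_Cn2: "eval g1 xs ua \<Longrightarrow> eval g2 xs ub \<Longrightarrow> eval f [ua, ub] y \<Longrightarrow> length xs = n
   \<Longrightarrow> eval (Cn n f [g1, g2]) xs y"
  by (rule eval_Cn[where ys="[ua,ub]"]) (auto simp: less_Suc_eq)

lemma eval_Idv: "i < n \<Longrightarrow> length xs = n \<Longrightarrow> v = xs ! i \<Longrightarrow> eval (Id n i) xs v"
  using eval_Id by blast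

definition ADD where "ADD = Pr 1 (Id 1 0) (Cn 3 S [Id 3 1])"

lemma eval_ADD: "eval ADD [k, x] (k + x)"
proof (induction k)
  case 0 then show ?case unfolding ADD_def by (auto intro!: eval_Pr0 eval_Idv)
next
  case (Suc k)
  have "eval (Cn 3 S [Id 3 1]) [k, k + x, x] (Suc (k + x))"
    by (rule eval_Cn1[where u="k+x"]) (auto intro: eval_S eval_Idv)
  with Suc show ?case unfolding ADD_def by (auto intro: eval_PrS)
qed

lemma eval_ADD': "v = k + x \<Longrightarrow> eval ADD [k, x] v"
  using eval_ADD by simp

definition TRI where "TRI = Pr 0 Z (Cn 2 ADD [Cn 2 S [Id 2 0], Id 2 1])"

lemma eval_TRI: "eval TRI [k] (triangle k)"
proof (induction k)
  case 0 then show ?case unfolding TRI_def by (auto intro!: eval_Pr0 eval_Z)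
next
  case (Suc k)
  have "eval (Cn 2 ADD [Cn 2 S [Id 2 0], Id 2 1]) [k, triangle k] (triangle (Suc k))"
    by (rule eval_Cn2[where ua="Suc k" and ub="triangle k"])
       (auto intro!: eval_Cn1[where u=k] eval_S eval_Idv eval_ADD')
  with Suc show ?case unfolding TRI_def by (auto intro: eval_PrS)
qed

lemma eval_TRI': "v = triangle k \<Longrightarrow> eval TRI [k] v"
  using eval_TRI by simp

definition PE where "PE = Cn 2 ADD [Id 2 0, Cn 2 TRI [Cn 2 ADD [Id 2 0, Id 2 1]]]"

lemma eval_PE: "eval PE [x, y] (prod_encode (x, y))"
  unfolding PE_def prod_encode_def
  by (rule eval_Cn2[where ua=x and ub="triangle (x+y)"])
     (auto intro!: eval_Cn1[where u="x+y"] eval_Cn2[where ua=x and ub=y] eval_TRI eval_ADD' eval_Idv)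

lemma eval_PE': "v = prod_encode (x, y) \<Longrightarrow> eval PE [x, y] v"
  using eval_PE by simp

definition PRED where "PRED = Pr 0 Z (Id 2 0)"
lemma eval_PRED: "eval PRED [k] (k - 1)"
proof (induction k)
  case 0 then show ?case by (auto simp: PRED_def intro!: eval_Pr0 eval_Z)
next
  case (Suc k) then show ?case unfolding PRED_def
    by (intro eval_PrS[where r="k-1"]) (auto intro: eval_Idv)
qed

definition SUB where "SUB = Pr 1 (Id 1 0) (Cn 3 PRED [Id 3 1])"
lemma eval_SUB: "eval SUB [k, x] (x - k)"
proof (induction k)
  case 0 then show ?case unfolding SUB_def by (auto intro!: eval_Pr0 eval_Idv)
next
  case (Suc k)
  have "eval (Cn 3 PRED [Id 3 1]) [k, x - k, x] (x - Suc k)"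
    by (rule eval_Cn1[where u="x-k"]) (auto intro: eval_Idv simp: eval_PRED[of "x-k", simplified])
  with Suc show ?case unfolding SUB_def by (auto intro: eval_PrS)
qed

lemma eval_SUB': "v = x - k \<Longrightarrow> eval SUB [k, x] v"
  using eval_SUB by simp

definition SRCHB where "SRCHB = Cn 2 SUB [Cn 2 TRI [Cn 2 S [Id 2 0]], Cn 2 S [Id 2 1]]"
definition SRCH where "SRCH = Mn 1 SRCHB"

lemma eval_srch_body: "eval SRCHB [k, z] (Suc z - triangle (Suc k))"
  unfolding SRCHB_def
  by (rule eval_Cn2[where ua="triangle (Suc k)" and ub="Suc z"])
     (auto intro!: eval_Cn1 eval_TRI' eval_S eval_SUB' eval_Idv)

lemma tri_mono: "a \<le> b \<Longrightarrow> triangle a \<le> triangle b"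
  by (induct b) (auto simp: le_Suc_eq)

lemma eval_SRCH: "eval SRCH [prod_encode (x, y)] (x + y)"
  unfolding SRCH_def
proof (rule eval_Mn)
  show "eval SRCHB [x + y, prod_encode (x, y)] 0"
    using eval_srch_body[of "x+y" "prod_encode (x, y)"] by (simp add: prod_encode_def)
  show "\<forall>ya<x + y. \<exists>v>0. eval SRCHB (ya # [prod_encode (x, y)]) v"
  proof (intro allI impI exI conjI)
    fix k assume k: "k < x + y"
    have "triangle (Suc k) \<le> triangle (x+y)" by (rule tri_mono) (use k in simp)
    then show "0 < Suc (prod_encode (x, y)) - triangle (Suc k)"
      by (simp add: prod_encode_def)
  qed (rule eval_srch_body)
qed simp

definition FST where "FST = Cn 1 SUB [Cn 1 TRI [SRCH], Id 1 0]"
definition SND where "SND = Cn 1 SUB [FST, SRCH]"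

lemma eval_SRCH': "z = prod_encode (x, y) \<Longrightarrow> v = x + y \<Longrightarrow> eval SRCH [z] v"
  using eval_SRCH by simp

lemma eval_FST: "eval FST [prod_encode (x, y)] x"
  unfolding FST_def
  by (rule eval_Cn2[where ua="triangle (x+y)" and ub="prod_encode (x, y)"])
     (auto intro!: eval_Cn1 eval_TRI eval_SRCH eval_Idv eval_SUB', simp add: prod_encode_def)

lemma eval_SND: "eval SND [prod_encode (x, y)] y"
  unfolding SND_def
  by (rule eval_Cn2[where ua="x" and ub="x+y"]) (auto intro!: eval_FST eval_SRCH eval_SUB')


datatype prog = Skip | Inc nat | Seq prog prog | Loop nat prog

inductive bigstep :: "prog \<Rightarrow> (nat \<Rightarrow> nat) \<Rightarrow> (nat \<Rightarrow> nat) \<Rightarrow> bool" where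
  bs_Skip: "bigstep Skip s s"
| bs_Inc: "bigstep (Inc r) s (s(r := Suc (s r)))"
| bs_Seq: "bigstep P s s' \<Longrightarrow> bigstep Q s' s'' \<Longrightarrow> bigstep (Seq P Q) s s''"
| bs_Loop0: "s r = 0 \<Longrightarrow> bigstep (Loop r P) s s"
| bs_LoopS: "s r = Suc k \<Longrightarrow> bigstep P (s(r := k)) s' \<Longrightarrow> bigstep (Loop r P) s' s''
     \<Longrightarrow> bigstep (Loop r P) s s''"

lemma bs_eq: "bigstep P s t \<Longrightarrow> t = t' \<Longrightarrow> bigstep P s t'" by simp

lemma bs_Inc': "t = s(r := Suc (s r)) \<Longrightarrow> bigstep (Inc r) s t" using bs_Inc by simp

definition clear where "clear r = Loop r Skip"
definition move where "move r d = Loop r (Inc d)"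
definition copy where "copy r d t = Seq (Loop r (Seq (Inc d) (Inc t))) (move t r)"

lemma bs_clear: "bigstep (clear r) s (s(r := 0))"
proof (induction "s r" arbitrary: s)
  case 0 then show ?case unfolding clear_def by (metis bs_Loop0 fun_upd_triv)
next
  case (Suc k)
  have "bigstep (clear r) (s(r := k)) ((s(r := k))(r := 0))" using Suc(1)[of "s(r:=k)"] by simp
  then show ?case unfolding clear_def using Suc(2)
    by (intro bs_LoopS[of s r k _ "s(r:=k)"]) (auto intro: bs_Skip)
qed

lemma bs_move: "r \<noteq> d \<Longrightarrow> bigstep (move r d) s (s(r := 0, d := s d + s r))"
proof (induction "s r" arbitrary: s)
  case 0 then show ?case unfolding move_def by (metis bs_Loop0 fun_upd_triv add_0_right)
next
  case (Suc k)
  let ?s1 = "s(r := k, d := Suc (s d))"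
  have "bigstep (move r d) ?s1 (?s1(r := 0, d := ?s1 d + ?s1 r))" using Suc by (intro Suc(1)) auto
  then show ?case unfolding move_def using Suc(2,3)
    by (intro bs_LoopS[of s r k _ ?s1]) (auto intro!: bs_Inc' elim!: bs_eq)
qed

lemma bs_loop2: "r \<noteq> d \<Longrightarrow> r \<noteq> t \<Longrightarrow> d \<noteq> t \<Longrightarrow>
   bigstep (Loop r (Seq (Inc d) (Inc t))) s (s(r := 0, d := s d + s r, t := s t + s r))"
proof (induction "s r" arbitrary: s)
  case 0 then show ?case by (metis bs_Loop0 fun_upd_triv add_0_right)
next
  case (Suc k)
  let ?s1 = "s(r := k, d := Suc (s d), t := Suc (s t))"
  have "bigstep (Loop r (Seq (Inc d) (Inc t))) ?s1 (?s1(r := 0, d := ?s1 d + ?s1 r, t := ?s1 t + ?s1 r))"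
    using Suc by (intro Suc(1)) auto
  then show ?case using Suc(2-5)
    by (intro bs_LoopS[of s r k _ ?s1]) (auto intro!: bs_Inc' bs_Seq elim!: bs_eq)
qed

lemma bs_copy: "r \<noteq> d \<Longrightarrow> r \<noteq> t \<Longrightarrow> d \<noteq> t \<Longrightarrow> s t = 0 \<Longrightarrow>
   bigstep (copy r d t) s (s(d := s d + s r))"
  unfolding copy_def
  apply (rule bs_Seq, rule bs_loop2, auto)
  apply (rule bs_eq, rule bs_move, auto)
  done

fun copyblk where
  "copyblk src dst 0 t = Skip"
| "copyblk src dst (Suc a) t = Seq (copyblk src dst a t) (copy (src + a) (dst + a) t)"

fun clearblk where
  "clearblk d 0 = Skip"
| "clearblk d (Suc a) = Seq (clearblk d a) (clear (d + a))"

lemma bs_copyblk: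
  assumes "src + a \<le> dst \<or> dst + a \<le> src" "\<not> (src \<le> t \<and> t < src + a)" "\<not> (dst \<le> t \<and> t < dst + a)"
    "s t = 0" "\<forall>j<a. s (dst + j) = 0"
  shows "bigstep (copyblk src dst a t) s (\<lambda>r. if dst \<le> r \<and> r < dst + a then s (src + (r - dst)) else s r)"
  using assms
proof (induction a)
  case 0 then show ?case by simp (rule bs_eq[OF bs_Skip], auto)
next
  case (Suc a)
  have 1: "bigstep (copyblk src dst a t) s (\<lambda>r. if dst \<le> r \<and> r < dst + a then s (src + (r - dst)) else s r)"
    using Suc by (intro Suc(1)) auto
  show ?case using Suc(2-6) 
    by (auto intro!: bs_Seq[OF 1] bs_eq[OF bs_copy] simp: fun_eq_iff)
qed

lemma bs_clearblk: "bigstep (clearblk d a) s (\<lambda>r. if d \<le> r \<and> r < d + a then 0 else s r)"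
proof (induction a)
  case 0 then show ?case by simp (rule bs_eq[OF bs_Skip], auto)
next
  case (Suc a)
  then show ?case by (auto intro!: bs_Seq[OF Suc] bs_eq[OF bs_clear] simp: fun_eq_iff)
qed


fun cnblocks :: "prog list \<Rightarrow> nat \<Rightarrow> nat \<Rightarrow> nat \<Rightarrow> nat \<Rightarrow> nat \<Rightarrow> prog" where
  "cnblocks [] a b c d i = Skip"
| "cnblocks (p # ps) a b c d i =
     Seq (Seq (copyblk b d a (d + a)) (Seq p (Seq (move (d + a) (c + i)) (clearblk d a))))
         (cnblocks ps a b c d (Suc i))"

fun compile :: "recf \<Rightarrow> nat \<Rightarrow> nat \<Rightarrow> prog" where
  "compile Z a b = Skip"
| "compile S a b = Seq (copy b (b+1) (b+2)) (Inc (b+1))"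
| "compile (Id n i) a b = copy (b+i) (b+a) (b+a+1)"
| "compile (Cn n f gs) a b =
     Seq (cnblocks (map (\<lambda>g. compile g a (b + a + 1 + length gs + 1)) gs) a b (b + a + 1) (b + a + 1 + length gs + 1) 0)
      (Seq (compile f (length gs) (b + a + 1))
        (Seq (move (b + a + 1 + length gs) (b+a)) (clearblk (b + a + 1) (length gs))))"
| "compile (Pr n g h) a b =
     Seq (copyblk (b+1) (b+a+4) (a-1) (b+a+4+(a-1)))
     (Seq (compile g (a-1) (b+a+4))
     (Seq (move (b+a+4+(a-1)) (b+a+3))
     (Seq (copy b (b+a+1) (b+a+4+(a-1)))
     (Seq (Loop (b+a+1) (Seq (compile h (a+1) (b+a+2))
             (Seq (clear (b+a+3)) (Seq (move (b+a+4+(a-1)) (b+a+3)) (Inc (b+a+2))))))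
     (Seq (move (b+a+3) (b+a)) (Seq (clear (b+a+2)) (clearblk (b+a+4) (a-1))))))))"
| "compile (Mn n f) a b =
     Seq (copyblk b (b+a+2) a (b+a+2+a))
     (Seq (compile f (a+1) (b+a+1))
     (Seq (Loop (b+a+2+a) (Seq (clear (b+a+2+a)) (Seq (Inc (b+a+1)) (compile f (a+1) (b+a+1)))))
     (Seq (move (b+a+1) (b+a)) (clearblk (b+a+2) a))))"


inductive iter :: "prog \<Rightarrow> nat \<Rightarrow> nat \<Rightarrow> (nat \<Rightarrow> nat) \<Rightarrow> (nat \<Rightarrow> nat) \<Rightarrow> bool" for P r where
  iter0: "iter P r 0 s s"
| iterS: "iter P r n s s' \<Longrightarrow> s' r = Suc k \<Longrightarrow> bigstep P (s'(r := k)) s'' \<Longrightarrow> iter P r (Suc n) s s''"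

lemma iter_loop: "iter P r n s s' \<Longrightarrow> bigstep (Loop r P) s' t \<Longrightarrow> bigstep (Loop r P) s t"
proof (induction arbitrary: t rule: iter.induct)
  case (iterS n s s' k s'')
  then show ?case by (meson bs_LoopS)
qed simp

inductive_cases evZ: "eval Z xs y"
inductive_cases evS: "eval S xs y"
inductive_cases evId: "eval (Id n i) xs y"
inductive_cases evCn: "eval (Cn n f gs) xs y"
inductive_cases evPr0: "eval (Pr n g h) (0 # xs) y"
inductive_cases evPrS: "eval (Pr n g h) (Suc k # xs) y"
inductive_cases evMn: "eval (Mn n f) xs y"

definition pre :: "nat list \<Rightarrow> nat \<Rightarrow> (nat \<Rightarrow> nat) \<Rightarrow> bool" where
  "pre xs b s \<longleftrightarrow> (\<forall>j<length xs. s (b + j) = xs ! j) \<and> (\<forall>r\<ge>b + length xs. s r = 0)"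

definition corr :: "recf \<Rightarrow> bool" where
  "corr f \<longleftrightarrow> (\<forall>xs y b s. eval f xs y \<longrightarrow> pre xs b s \<longrightarrow>
      bigstep (compile f (length xs) b) s (s(b + length xs := y)))"

lemma corr_Z: "corr Z"
  unfolding corr_def pre_def
  by (auto elim!: evZ intro!: bs_eq[OF bs_Skip])

lemma corr_S: "corr S"
  unfolding corr_def pre_def
proof (intro allI impI, elim conjE)
  fix xs y b s assume e: "eval S xs y" and h: "\<forall>j<length xs. s (b + j) = xs ! j" "\<forall>r\<ge>b + length xs. s r = 0"
  from e obtain x where xs: "xs = [x]" "y = Suc x" by (cases rule: eval.cases) auto
  show "bigstep (compile S (length xs) b) s (s(b + length xs := y))"
    using h xs by (auto intro!: bs_Seq[OF bs_copy] bs_Inc' simp: fun_eq_iff)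
qed

lemma corr_Id: "corr (Id n i)"
  unfolding corr_def pre_def
proof (intro allI impI, elim conjE)
  fix xs y b s assume e: "eval (Id n i) xs y" and h: "\<forall>j<length xs. s (b + j) = xs ! j" "\<forall>r\<ge>b + length xs. s r = 0"
  from e have xs: "i < length xs" "y = xs ! i" "n = length xs" by (auto elim!: evId)
  show "bigstep (compile (Id n i) (length xs) b) s (s(b + length xs := y))"
    using h xs by (auto intro!: bs_eq[OF bs_copy] simp: fun_eq_iff)
qed


lemma corr_Cn:
  assumes IHf: "corr f" and IHg: "\<And>g. g \<in> set gs \<Longrightarrow> corr g"
  shows "corr (Cn n f gs)"
  unfolding corr_def
proof (intro allI impI)
  fix xs y b s assume e: "eval (Cn n f gs) xs y" and pr: "pre xs b s"
  from e obtain ys where ys: "length xs = n" "length gs = length ys"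
     "\<forall>i<length gs. eval (gs ! i) xs (ys ! i)" "eval f ys y"
    by (auto elim!: evCn)
  define a where "a = length xs"
  define m where "m = length gs"
  define c where "c = b + a + 1"
  define d where "d = c + m + 1"
  define progs where "progs = map (\<lambda>g. compile g a d) gs"
  define St where "St i = (\<lambda>r. if c \<le> r \<and> r < c + i then ys ! (r - c) else s r)" for i
  have s_in: "\<And>j. j < a \<Longrightarrow> s (b + j) = xs ! j" and s_out: "\<And>r. r \<ge> b + a \<Longrightarrow> s r = 0"
    using pr unfolding pre_def a_def by auto
  have block: "bigstep (Seq (copyblk b d a (d + a)) (Seq (progs ! i) (Seq (move (d + a) (c + i)) (clearblk d a))))
                 (St i) (St (Suc i))" if i: "i < m" for i
  proof -
    define A where "A = (\<lambda>r. if d \<le> r \<and> r < d + a then St i (b + (r - d)) else St i r)"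
    have 1: "bigstep (copyblk b d a (d + a)) (St i) A"
      unfolding A_def using s_out i by (intro bs_copyblk) (auto simp: St_def d_def c_def)
    have "pre xs d A"
      unfolding pre_def A_def St_def using s_in s_out i by (auto simp: d_def c_def a_def)
    moreover have "eval (gs ! i) xs (ys ! i)" using ys i m_def by auto
    moreover have "corr (gs ! i)" using IHg i m_def by auto
    ultimately have 2: "bigstep (progs ! i) A (A(d + a := ys ! i))"
      unfolding corr_def progs_def using i m_def a_def by auto
    have 3: "bigstep (move (d + a) (c + i)) (A(d + a := ys ! i)) (A(d + a := 0, c + i := ys ! i))"
      using i s_out by (intro bs_eq[OF bs_move]) (auto simp: A_def St_def d_def c_def m_def)
    have 4: "bigstep (clearblk d a) (A(d + a := 0, c + i := ys ! i)) (St (Suc i))"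
      using i s_out by (intro bs_eq[OF bs_clearblk]) (auto simp: A_def St_def d_def c_def fun_eq_iff)
    show ?thesis by (intro bs_Seq[OF 1] bs_Seq[OF 2] bs_Seq[OF 3] 4)
  qed
  have blocks: "ps = drop i progs \<Longrightarrow> i \<le> m \<Longrightarrow> bigstep (cnblocks ps a b c d i) (St i) (St m)" for ps i
  proof (induction ps arbitrary: i)
    case Nil
    then have "i = m" using m_def progs_def by auto
    then show ?case by (auto intro: bs_Skip)
  next
    case (Cons p ps)
    have im: "i < m" using Cons.prems m_def progs_def by (metis drop_all leI list.distinct(1) length_map)
    have "progs ! i # drop (Suc i) progs = drop i progs"
      using im by (intro Cons_nth_drop_Suc) (simp add: progs_def m_def)
    then have pp: "p = progs ! i" "ps = drop (Suc i) progs" using Cons.prems by (metis list.inject)+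
    show ?case using block[OF im] Cons.IH[OF pp(2)] im pp by (auto intro: bs_Seq)
  qed
  have "St 0 = s" by (simp add: St_def fun_eq_iff)
  then have B: "bigstep (cnblocks progs a b c d 0) s (St m)"
    using blocks[of progs 0] by simp
  have "pre ys c (St m)"
    unfolding pre_def St_def using s_out ys(2) by (auto simp: c_def m_def)
  then have F: "bigstep (compile f m c) (St m) ((St m)(c + m := y))"
    using IHf ys(4) ys(2) unfolding corr_def m_def by auto
  have M: "bigstep (move (c + m) (b + a)) ((St m)(c + m := y)) ((St m)(c + m := 0, b + a := y))"
    using s_out by (intro bs_eq[OF bs_move]) (auto simp: St_def c_def)
  have C: "bigstep (clearblk c m) ((St m)(c + m := 0, b + a := y)) (s(b + a := y))"
    using s_out by (intro bs_eq[OF bs_clearblk]) (auto simp: St_def c_def fun_eq_iff)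
  show "bigstep (compile (Cn n f gs) (length xs) b) s (s(b + length xs := y))"
    using bs_Seq[OF B bs_Seq[OF F bs_Seq[OF M C]]]
    by (simp add: progs_def a_def c_def d_def m_def)
qed


lemma corr_Pr:
  assumes IHg: "corr g" and IHh: "corr h"
  shows "corr (Pr n g h)"
  unfolding corr_def
proof (intro allI impI)
  fix xs' y b s assume e: "eval (Pr n g h) xs' y" and pr: "pre xs' b s"
  from e obtain k xs where xs': "xs' = k # xs" by (cases rule: eval.cases) auto
  define n' where "n' = length xs"
  define a where "a = Suc n'"
  have la: "length xs' = a" using xs' a_def n'_def by simp
  define cnt where "cnt = b + a + 1"
  define c where "c = b + a + 2"
  define out where "out = c + 2 + n'"
  define LS where "LS K i r = (\<lambda>q. if q = cnt then K else if q = c then i else if q = c + 1 then r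
       else if c + 2 \<le> q \<and> q < c + 2 + n' then xs ! (q - (c + 2)) else s q)" for K i r
  define Body where "Body = Seq (compile h (a+1) c) (Seq (clear (c+1)) (Seq (move out (c+1)) (Inc c)))"
  have s_in: "\<And>j. j < n' \<Longrightarrow> s (b + 1 + j) = xs ! j" "s b = k"
    using pr unfolding pre_def xs' n'_def by auto
  have s_out: "\<And>r. r \<ge> b + a \<Longrightarrow> s r = 0"
    using pr la unfolding pre_def by auto
  have body: "bigstep Body (LS K i r) (LS K (Suc i) y')" if eh: "eval h (i # r # xs) y'" for K i r y'
  proof -
    have "pre (i # r # xs) c (LS K i r)"
      unfolding pre_def LS_def using s_out
      by (auto simp: c_def cnt_def n'_def nth_Cons' a_def numeral_2_eq_2)
    then have "bigstep (compile h (length (i#r#xs)) c) (LS K i r) ((LS K i r)(c + length (i#r#xs) := y'))"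
      using IHh eh unfolding corr_def by blast
    then have 1: "bigstep (compile h (a+1) c) (LS K i r) ((LS K i r)(out := y'))"
      by (simp add: out_def a_def n'_def)
    have 2: "bigstep (clear (c+1)) ((LS K i r)(out := y')) ((LS K i r)(out := y', c + 1 := 0))"
      by (rule bs_eq[OF bs_clear]) (auto simp: out_def)
    have 3: "bigstep (move out (c+1)) ((LS K i r)(out := y', c + 1 := 0)) ((LS K i r)(out := 0, c + 1 := y'))"
      by (rule bs_eq[OF bs_move]) (auto simp: out_def fun_eq_iff)
    have 4: "bigstep (Inc c) ((LS K i r)(out := 0, c + 1 := y')) (LS K (Suc i) y')"
      using s_out by (intro bs_Inc') (auto simp: LS_def out_def fun_eq_iff c_def cnt_def)
    show ?thesis unfolding Body_def by (intro bs_Seq[OF 1] bs_Seq[OF 2] bs_Seq[OF 3] 4)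
  qed
  have LSupd: "(LS K i r)(cnt := K') = LS K' i r" for K i r K'
    by (auto simp: LS_def fun_eq_iff c_def)
  have loopc: "eval (Pr n g h) (j # xs) yj \<Longrightarrow> (\<exists>y0. eval g xs y0 \<and>
       (\<forall>K. j \<le> K \<longrightarrow> iter Body cnt j (LS K 0 y0) (LS (K - j) j yj)))" for j yj
  proof (induction j arbitrary: yj)
    case 0
    then have "eval g xs yj" by (auto elim: evPr0)
    then show ?case by (auto intro!: exI[of _ yj] iter0)
  next
    case (Suc j)
    from Suc.prems obtain r where r: "eval (Pr n g h) (j # xs) r" "eval h (j # r # xs) yj"
      by (auto elim: evPrS)
    from Suc.IH[OF r(1)] obtain y0 where y0: "eval g xs y0"
      "\<forall>K. j \<le> K \<longrightarrow> iter Body cnt j (LS K 0 y0) (LS (K - j) j r)" by blast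
    show ?case
    proof (intro exI conjI allI impI)
      fix K assume K: "Suc j \<le> K"
      have "(LS (K - j) j r) cnt = Suc (K - Suc j)" using K by (simp add: LS_def)
      moreover have "bigstep Body ((LS (K - j) j r)(cnt := K - Suc j)) (LS (K - Suc j) (Suc j) yj)"
        unfolding LSupd by (rule body[OF r(2)])
      ultimately show "iter Body cnt (Suc j) (LS K 0 y0) (LS (K - Suc j) (Suc j) yj)"
        using y0(2) K by (intro iterS) auto
    qed (fact y0(1))
  qed
  from loopc[of k y] e xs' obtain y0 where y0: "eval g xs y0"
    "iter Body cnt k (LS k 0 y0) (LS 0 k y)" by auto
  define A1 where "A1 = (\<lambda>q. if c + 2 \<le> q \<and> q < c + 2 + n' then s (b + 1 + (q - (c + 2))) else s q)"
  have 1: "bigstep (copyblk (b+1) (c+2) n' out) s A1"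
    unfolding A1_def using s_out by (intro bs_copyblk) (auto simp: c_def out_def a_def)
  have A1_eq: "A1 = (\<lambda>q. if c + 2 \<le> q \<and> q < c + 2 + n' then xs ! (q - (c + 2)) else s q)"
    unfolding A1_def
  proof (rule ext)
    fix q show "(if c + 2 \<le> q \<and> q < c + 2 + n' then s (b + 1 + (q - (c + 2))) else s q) =
       (if c + 2 \<le> q \<and> q < c + 2 + n' then xs ! (q - (c + 2)) else s q)"
      using s_in(1)[of "q - (c+2)"] by auto
  qed
  have "pre xs (c+2) A1" unfolding pre_def A1_def using s_in s_out
    by (auto simp: n'_def c_def a_def)
  then have "bigstep (compile g (length xs) (c+2)) A1 (A1(c + 2 + length xs := y0))"
    using IHg y0(1) unfolding corr_def by blast
  then have 2: "bigstep (compile g n' (c+2)) A1 (A1(out := y0))"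
    by (simp add: out_def n'_def)
  have 3: "bigstep (move out (c+1)) (A1(out := y0)) (A1(out := 0, c + 1 := y0))"
    using s_out by (intro bs_eq[OF bs_move]) (auto simp: out_def A1_eq fun_eq_iff c_def)
  have 4: "bigstep (copy b cnt out) (A1(out := 0, c + 1 := y0)) (LS k 0 y0)"
    using s_out s_in by (intro bs_eq[OF bs_copy])
       (auto simp: out_def A1_eq fun_eq_iff c_def cnt_def LS_def a_def)
  have 5: "bigstep (Loop cnt Body) (LS k 0 y0) (LS 0 k y)"
    by (rule iter_loop[OF y0(2)]) (rule bs_Loop0, simp add: LS_def)
  have 6: "bigstep (move (c+1) (b+a)) (LS 0 k y) ((LS 0 k y)(c + 1 := 0, b + a := y))"
    using s_out by (intro bs_eq[OF bs_move]) (auto simp: LS_def fun_eq_iff c_def cnt_def)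
  have 7: "bigstep (clear c) ((LS 0 k y)(c + 1 := 0, b + a := y)) ((LS 0 k y)(c + 1 := 0, b + a := y, c := 0))"
    by (rule bs_clear)
  have 8: "bigstep (clearblk (c+2) n') ((LS 0 k y)(c + 1 := 0, b + a := y, c := 0)) (s(b + a := y))"
    using s_out by (intro bs_eq[OF bs_clearblk]) (auto simp: LS_def fun_eq_iff c_def cnt_def)
  have "a - 1 = n'" "b + a + 4 = c + 2" "b + a + 4 + n' = out" "b + a + 3 = c + 1" "b + a + 2 = c"
    by (auto simp: a_def c_def out_def)
  then show "bigstep (compile (Pr n g h) (length xs') b) s (s(b + length xs' := y))"
    unfolding la compile.simps using 1 2 3 4 5 6 7 8
    by (simp only: Body_def cnt_def) (meson bs_Seq)
qed


lemma corr_Mn: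
  assumes IHf: "corr f"
  shows "corr (Mn n f)"
  unfolding corr_def
proof (intro allI impI)
  fix xs z b s assume e: "eval (Mn n f) xs z" and pr: "pre xs b s"
  from e have ez: "eval f (z # xs) 0" "\<forall>y<z. \<exists>v>0. eval f (y # xs) v"
    by (auto elim: evMn)
  define a where "a = length xs"
  define c where "c = b + a + 1"
  define out where "out = c + 1 + a"
  define MS where "MS j v = (\<lambda>q. if q = c then j else if c + 1 \<le> q \<and> q < c + 1 + a then xs ! (q - (c + 1))
     else if q = out then v else s q)" for j v
  define V where "V j = (if j < z then (SOME v. 0 < v \<and> eval f (j # xs) v) else 0)" for j
  have VV: "eval f (j # xs) (V j)" if "j \<le> z" for j
  proof (cases "j < z")
    case True
    then have "\<exists>v. 0 < v \<and> eval f (j # xs) v" using ez by auto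
    then show ?thesis using True unfolding V_def by (metis (mono_tags, lifting) someI_ex)
  next
    case False then show ?thesis using ez that by (auto simp: V_def)
  qed
  have Vpos: "0 < V j" if "j < z" for j
  proof -
    have "\<exists>v. 0 < v \<and> eval f (j # xs) v" using ez that by auto
    then show ?thesis using that unfolding V_def by (metis (mono_tags, lifting) someI_ex)
  qed
  have s_in: "\<And>j. j < a \<Longrightarrow> s (b + j) = xs ! j" and s_out: "\<And>r. r \<ge> b + a \<Longrightarrow> s r = 0"
    using pr unfolding pre_def a_def by auto
  have fcomp: "bigstep (compile f (a+1) c) (MS j 0) (MS j v)" if ev: "eval f (j # xs) v" for j v
  proof -
    have "pre (j # xs) c (MS j 0)"
      unfolding pre_def MS_def using s_out by (auto simp: c_def out_def nth_Cons' a_def)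
    then have "bigstep (compile f (length (j # xs)) c) (MS j 0) ((MS j 0)(c + length (j # xs) := v))"
      using IHf ev unfolding corr_def by blast
    moreover have "(MS j 0)(c + length (j # xs) := v) = MS j v"
      by (auto simp: MS_def fun_eq_iff out_def a_def)
    ultimately show ?thesis by (simp add: a_def)
  qed
  define Body where "Body = Seq (clear out) (Seq (Inc c) (compile f (a+1) c))"
  have it: "j \<le> z \<Longrightarrow> iter Body out j (MS 0 (V 0)) (MS j (V j))" for j
  proof (induction j)
    case 0 show ?case by (rule iter0)
  next
    case (Suc j)
    then have jz: "j < z" by simp
    then obtain k' where k': "V j = Suc k'" using Vpos[OF jz] by (cases "V j") auto
    have 1: "bigstep (clear out) ((MS j (V j))(out := k')) (MS j 0)"
      by (rule bs_eq[OF bs_clear]) (auto simp: MS_def fun_eq_iff out_def)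
    have 2: "bigstep (Inc c) (MS j 0) (MS (Suc j) 0)"
      by (rule bs_Inc') (auto simp: MS_def fun_eq_iff out_def)
    have 3: "bigstep (compile f (a+1) c) (MS (Suc j) 0) (MS (Suc j) (V (Suc j)))"
      using VV[of "Suc j"] Suc.prems by (intro fcomp) auto
    have o: "(MS j (V j)) out = Suc k'" by (simp add: MS_def out_def k')
    have "bigstep Body ((MS j (V j))(out := k')) (MS (Suc j) (V (Suc j)))"
      unfolding Body_def by (meson 1 2 3 bs_Seq)
    then show ?case using Suc.IH jz o by (intro iterS) auto
  qed
  define A where "A = (\<lambda>q. if c + 1 \<le> q \<and> q < c + 1 + a then s (b + (q - (c + 1))) else s q)"
  have A_eq: "A = MS 0 0"
    unfolding A_def MS_def
  proof (rule ext)
    fix q show "(if c + 1 \<le> q \<and> q < c + 1 + a then s (b + (q - (c + 1))) else s q) =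
       (if q = c then 0 else if c + 1 \<le> q \<and> q < c + 1 + a then xs ! (q - (c + 1)) else if q = out then 0 else s q)"
      using s_in[of "q - (c+1)"] s_out by (auto simp: c_def out_def)
  qed
  have 1: "bigstep (copyblk b (c+1) a out) s (MS 0 0)"
    unfolding A_eq[symmetric] A_def using s_out by (intro bs_copyblk) (auto simp: c_def out_def)
  have 2: "bigstep (compile f (a+1) c) (MS 0 0) (MS 0 (V 0))"
    by (rule fcomp, rule VV) simp
  have 3: "bigstep (Loop out Body) (MS 0 (V 0)) (MS z 0)"
    by (rule iter_loop[OF it[of z]]) (auto intro!: bs_Loop0 simp: MS_def V_def out_def)
  have 4: "bigstep (move c (b+a)) (MS z 0) ((MS z 0)(c := 0, b + a := z))"
    using s_out by (intro bs_eq[OF bs_move]) (auto simp: MS_def fun_eq_iff c_def out_def)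
  have 5: "bigstep (clearblk (c+1) a) ((MS z 0)(c := 0, b + a := z)) (s(b + a := z))"
    using s_out by (intro bs_eq[OF bs_clearblk]) (auto simp: MS_def fun_eq_iff c_def out_def)
  have "b + a + 2 = c + 1" "b + a + 2 + a = out" "b + a + 1 = c"
    by (auto simp: c_def out_def)
  then show "bigstep (compile (Mn n f) (length xs) b) s (s(b + length xs := z))"
    unfolding a_def[symmetric] compile.simps using 1 2 3 4 5
    by (simp only: Body_def) (meson bs_Seq)
qed

theorem corr_all: "corr f"
proof (induction f)
  case Z then show ?case by (rule corr_Z)
next
  case S then show ?case by (rule corr_S)
next
  case (Id n i) then show ?case by (rule corr_Id)
next
  case (Cn n f gs) then show ?case by (intro corr_Cn) auto
next
  case (Pr n g h) then show ?case by (intro corr_Pr)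
next
  case (Mn n f) then show ?case by (intro corr_Mn)
qed


fun psize :: "prog \<Rightarrow> nat" where
  "psize Skip = 1"
| "psize (Inc r) = 2"
| "psize (Seq P Q) = psize P + psize Q"
| "psize (Loop r P) = Suc (psize P)"

fun regs :: "prog \<Rightarrow> nat" where
  "regs Skip = 0"
| "regs (Inc r) = Suc r"
| "regs (Seq P Q) = max (regs P) (regs Q)"
| "regs (Loop r P) = max (Suc r) (regs P)"

fun flat :: "prog \<Rightarrow> nat \<Rightarrow> nat \<Rightarrow> trans set" where
  "flat Skip e x = {(e, 1, Some 1, 1, Some 1, x)}"
| "flat (Inc r) e x = {(e, r+2, Some 0, r+2, Some 0, e), (e, r+2, Some 1, r+2, Some 0, Suc e),
                       (Suc e, 0, Some 2, r+2, Some 1, x)}"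
| "flat (Seq P Q) e x = flat P e (e + psize P) \<union> flat Q (e + psize P) x"
| "flat (Loop r P) e x = {(e, r+2, Some 0, r+2, None, Suc e), (e, r+2, Some 1, r+2, Some 1, x)}
                         \<union> flat P (Suc e) e"

definition rstep :: "trans set \<Rightarrow> nat \<times> valuation \<Rightarrow> nat \<times> valuation \<Rightarrow> bool" where
  "rstep D C C' \<longleftrightarrow> (\<exists>c a c' a'. (fst C, c, Some a, c', a', fst C') \<in> D \<and>
     ((c = 0 \<and> a = 2 \<and> c' \<noteq> 0 \<and> snd C' = (snd C)(c' := snd C c' @ opt_word a')) \<or>
      (c \<noteq> 0 \<and> c' = c \<and> (\<exists>w. snd C c = a # w \<and> snd C' = (snd C)(c := w @ opt_word a')))))"

lemma rstep_mono: "D \<subseteq> D' \<Longrightarrow> rstep D C C' \<Longrightarrow> rstep D' C C'"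
  unfolding rstep_def by blast

lemma rsteps_mono: assumes "D \<subseteq> D'" shows "(rstep D)\<^sup>*\<^sup>* C C' \<Longrightarrow> (rstep D')\<^sup>*\<^sup>* C C'"
  by (induction rule: rtranclp_induct) (auto intro: rtranclp.rtrancl_into_rtrancl rstep_mono[OF assms])

lemma rstep_read: "(q, c, Some a, c, a', q') \<in> D \<Longrightarrow> c \<noteq> 0 \<Longrightarrow> \<nu> c = a # w \<Longrightarrow>
   \<nu>' = \<nu>(c := w @ opt_word a') \<Longrightarrow> rstep D (q, \<nu>) (q', \<nu>')"
  unfolding rstep_def
  by (rule exI[of _ c], rule exI[of _ a], rule exI[of _ c], rule exI[of _ a']) auto

lemma rstep_write: "(q, 0, Some 2, c', Some l, q') \<in> D \<Longrightarrow> c' \<noteq> 0 \<Longrightarrow>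
   \<nu>' = \<nu>(c' := \<nu> c' @ [l]) \<Longrightarrow> rstep D (q, \<nu>) (q', \<nu>')"
  unfolding rstep_def by force

definition encv :: "nat \<Rightarrow> (nat \<Rightarrow> nat) \<Rightarrow> valuation" where
  "encv NR s = (\<lambda>ch. if ch = 1 then [1] else if 2 \<le> ch \<and> ch < NR + 2 then replicate (s (ch - 2)) 0 @ [1] else [])"

lemma encv_upd: "r < NR \<Longrightarrow> encv NR (s(r := v)) = (encv NR s)(r + 2 := replicate v 0 @ [1])"
  by (auto simp: encv_def fun_eq_iff)

lemma encv_at: "r < NR \<Longrightarrow> encv NR s (r + 2) = replicate (s r) 0 @ [1]"
  by (auto simp: encv_def)

lemma rot: "(e, ch, Some 0, ch, Some 0, e) \<in> D \<Longrightarrow> ch \<noteq> 0 \<Longrightarrow>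
  (rstep D)\<^sup>*\<^sup>* (e, \<nu>(ch := replicate j 0 @ ws)) (e, \<nu>(ch := ws @ replicate j 0))"
proof (induction j arbitrary: ws)
  case 0 then show ?case by simp
next
  case (Suc j)
  have "rstep D (e, \<nu>(ch := replicate (Suc j) 0 @ ws)) (e, \<nu>(ch := replicate j 0 @ (ws @ [0])))"
    by (rule rstep_read[OF Suc.prems(1,2)]) auto
  moreover have "(rstep D)\<^sup>*\<^sup>* (e, \<nu>(ch := replicate j 0 @ (ws @ [0]))) (e, \<nu>(ch := (ws @ [0]) @ replicate j 0))"
    by (rule Suc.IH[OF Suc.prems])
  moreover have "(ws @ [0]) @ replicate j 0 = ws @ replicate (Suc j) 0"
    by (simp add: replicate_append_same)
  ultimately show ?case by (metis converse_rtranclp_into_rtranclp)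
qed

lemma sim: "bigstep P s s' \<Longrightarrow> regs P \<le> NR \<Longrightarrow>
   (rstep (flat P e x))\<^sup>*\<^sup>* (e, encv NR s) (x, encv NR s')"
proof (induction arbitrary: e x rule: bigstep.induct)
  case (bs_Skip s)
  have "rstep (flat Skip e x) (e, encv NR s) (x, encv NR s)"
    by (rule rstep_read[where w="[]" and a=1 and a'="Some 1" and c=1]) (auto simp: encv_def fun_eq_iff)
  then show ?case by auto
next
  case (bs_Inc r s)
  then have r: "r < NR" by simp
  let ?\<nu> = "encv NR s"
  have "(rstep (flat (Inc r) e x))\<^sup>*\<^sup>* (e, ?\<nu>(r+2 := replicate (s r) 0 @ [1])) (e, ?\<nu>(r+2 := [1] @ replicate (s r) 0))"
    by (rule rot) auto
  then have 1: "(rstep (flat (Inc r) e x))\<^sup>*\<^sup>* (e, ?\<nu>) (e, ?\<nu>(r+2 := [1] @ replicate (s r) 0))"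
    using encv_at[OF r, of s] by (metis fun_upd_triv)
  have 2: "rstep (flat (Inc r) e x) (e, ?\<nu>(r+2 := [1] @ replicate (s r) 0)) (Suc e, ?\<nu>(r+2 := replicate (Suc (s r)) 0))"
    by (rule rstep_read[where a=1 and a'="Some 0" and c="r+2"]) (auto simp: replicate_append_same)
  have 3: "rstep (flat (Inc r) e x) (Suc e, ?\<nu>(r+2 := replicate (Suc (s r)) 0)) (x, encv NR (s(r := Suc (s r))))"
    by (rule rstep_write) (auto simp: encv_upd[OF r])
  show ?case using 1 2 3 by (meson rtranclp.rtrancl_into_rtrancl)
next
  case (bs_Seq P s s' Q s'')
  have "(rstep (flat P e (e + psize P)))\<^sup>*\<^sup>* (e, encv NR s) (e + psize P, encv NR s')"
    using bs_Seq by auto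
  then have 1: "(rstep (flat (Seq P Q) e x))\<^sup>*\<^sup>* (e, encv NR s) (e + psize P, encv NR s')"
    by (rule rsteps_mono[rotated]) auto
  have "(rstep (flat Q (e + psize P) x))\<^sup>*\<^sup>* (e + psize P, encv NR s') (x, encv NR s'')"
    using bs_Seq by auto
  then have 2: "(rstep (flat (Seq P Q) e x))\<^sup>*\<^sup>* (e + psize P, encv NR s') (x, encv NR s'')"
    by (rule rsteps_mono[rotated]) auto
  show ?case using 1 2 by auto
next
  case (bs_Loop0 s r P)
  then have r: "r < NR" by simp
  have "rstep (flat (Loop r P) e x) (e, encv NR s) (x, encv NR s)"
    by (rule rstep_read[where w="[]" and a=1 and a'="Some 1" and c="r+2"]) (use bs_Loop0 r in \<open>auto simp: encv_def fun_eq_iff\<close>)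
  then show ?case by auto
next
  case (bs_LoopS s r k P s' s'')
  then have r: "r < NR" by simp
  have 1: "rstep (flat (Loop r P) e x) (e, encv NR s) (Suc e, encv NR (s(r := k)))"
    by (rule rstep_read[where w="replicate k 0 @ [1]" and a=0 and a'=None and c="r+2"]) (use bs_LoopS r encv_at[OF r, of s] in \<open>auto simp: encv_upd\<close>)
  have "regs P \<le> NR" using bs_LoopS.prems by simp
  then have "(rstep (flat P (Suc e) e))\<^sup>*\<^sup>* (Suc e, encv NR (s(r := k))) (e, encv NR s')"
    using bs_LoopS.IH(1) by blast
  then have 2: "(rstep (flat (Loop r P) e x))\<^sup>*\<^sup>* (Suc e, encv NR (s(r := k))) (e, encv NR s')"
    by (rule rsteps_mono[rotated]) auto
  have 3: "(rstep (flat (Loop r P) e x))\<^sup>*\<^sup>* (e, encv NR s') (x, encv NR s'')"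
    using bs_LoopS by auto
  show ?case using 1 2 3 by (meson converse_rtranclp_into_rtranclp rtranclp_trans)
qed


definition detD :: "trans set \<Rightarrow> bool" where
  "detD D \<longleftrightarrow> (\<forall>q c1 a1 c1' b1 q1 c2 a2 c2' b2 q2. (q, c1, Some a1, c1', b1, q1) \<in> D \<longrightarrow>
      (q, c2, Some a2, c2', b2, q2) \<in> D \<longrightarrow>
      ((c1, a1, c1', b1, q1) = (c2, a2, c2', b2, q2) \<or> (c1 = c2 \<and> c1 \<noteq> 0 \<and> a1 \<noteq> a2)))"

lemma detD_Un: assumes dA: "detD A" and dB: "detD B" and sA: "\<forall>t\<in>A. fst t \<in> SA" and
  sB: "\<forall>t\<in>B. fst t \<in> SB" and dis: "SA \<inter> SB = {}" shows "detD (A \<union> B)"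
  unfolding detD_def
proof (intro allI impI)
  fix q c1 a1 c1' b1 q1 c2 a2 c2' b2 q2
  assume h1: "(q, c1, Some a1, c1', b1, q1) \<in> A \<union> B" and h2: "(q, c2, Some a2, c2', b2, q2) \<in> A \<union> B"
  show "(c1, a1, c1', b1, q1) = (c2, a2, c2', b2, q2) \<or> c1 = c2 \<and> c1 \<noteq> 0 \<and> a1 \<noteq> a2"
  proof (cases "(q, c1, Some a1, c1', b1, q1) \<in> A")
    case True
    then have "q \<in> SA" using sA by force
    then have "(q, c2, Some a2, c2', b2, q2) \<in> A" using h2 sB dis by force
    then show ?thesis using True dA unfolding detD_def by blast
  next
    case False
    then have B1: "(q, c1, Some a1, c1', b1, q1) \<in> B" using h1 by auto
    then have "q \<in> SB" using sB by force
    then have "(q, c2, Some a2, c2', b2, q2) \<in> B" using h2 sA dis by force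
    then show ?thesis using B1 dB unfolding detD_def by blast
  qed
qed

lemma psize_pos: "0 < psize P"
  by (induction P) auto

lemma flat_props: "(\<forall>t \<in> flat P e x. e \<le> fst t \<and> fst t < e + psize P) \<and> detD (flat P e x)"
proof (induction P arbitrary: e x)
  case Skip then show ?case by (auto simp: detD_def)
next
  case (Inc r) then show ?case by (auto simp: detD_def)
next
  case (Seq P Q)
  have 1: "\<forall>t \<in> flat P e (e + psize P). fst t \<in> {e..<e + psize P}" using Seq.IH(1) by auto
  have 2: "\<forall>t \<in> flat Q (e + psize P) x. fst t \<in> {e + psize P..<e + psize P + psize Q}" using Seq.IH(2) by auto
  have "detD (flat P e (e + psize P) \<union> flat Q (e + psize P) x)"
    by (rule detD_Un[OF _ _ 1 2]) (use Seq.IH in auto)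
  then show ?case using 1 2 by auto
next
  case (Loop r P)
  have 1: "\<forall>t \<in> {(e, r+2, Some 0, r+2, None, Suc e), (e, r+2, Some 1, r+2, Some 1, x)}. fst t \<in> {e}" by auto
  have 2: "\<forall>t \<in> flat P (Suc e) e. fst t \<in> {Suc e..<Suc e + psize P}" using Loop.IH[of "Suc e" e] by auto
  have "detD ({(e, r+2, Some 0, r+2, None, Suc e), (e, r+2, Some 1, r+2, Some 1, x)} \<union> flat P (Suc e) e)"
    by (rule detD_Un[OF _ _ 1 2]) (use Loop.IH in \<open>auto simp: detD_def\<close>)
  then show ?case using 2 by auto
qed

lemma rstep_det: assumes "detD D" "rstep D C C1" "rstep D C C2" shows "C1 = C2"
proof -
  obtain q \<nu> q1 \<nu>1 q2 \<nu>2 where C: "C = (q, \<nu>)" "C1 = (q1, \<nu>1)" "C2 = (q2, \<nu>2)" by (cases C, cases C1, cases C2)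
  from assms(2) obtain c1 a1 c1' b1 where t1: "(q, c1, Some a1, c1', b1, q1) \<in> D"
    "(c1 = 0 \<and> a1 = 2 \<and> c1' \<noteq> 0 \<and> \<nu>1 = \<nu>(c1' := \<nu> c1' @ opt_word b1)) \<or>
     (c1 \<noteq> 0 \<and> c1' = c1 \<and> (\<exists>w. \<nu> c1 = a1 # w \<and> \<nu>1 = \<nu>(c1 := w @ opt_word b1)))"
    unfolding rstep_def C by auto
  from assms(3) obtain c2 a2 c2' b2 where t2: "(q, c2, Some a2, c2', b2, q2) \<in> D"
    "(c2 = 0 \<and> a2 = 2 \<and> c2' \<noteq> 0 \<and> \<nu>2 = \<nu>(c2' := \<nu> c2' @ opt_word b2)) \<or>
     (c2 \<noteq> 0 \<and> c2' = c2 \<and> (\<exists>w. \<nu> c2 = a2 # w \<and> \<nu>2 = \<nu>(c2 := w @ opt_word b2)))"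
    unfolding rstep_def C by auto
  from assms(1) t1(1) t2(1) have "(c1, a1, c1', b1, q1) = (c2, a2, c2', b2, q2) \<or> (c1 = c2 \<and> c1 \<noteq> 0 \<and> a1 \<noteq> a2)"
    unfolding detD_def by blast
  then show ?thesis
  proof
    assume "(c1, a1, c1', b1, q1) = (c2, a2, c2', b2, q2)"
    then show ?thesis using t1(2) t2(2) C by auto
  next
    assume "c1 = c2 \<and> c1 \<noteq> 0 \<and> a1 \<noteq> a2"
    then show ?thesis using t1(2) t2(2) by auto
  qed
qed

lemma det_reach:
  assumes det: "\<And>x y z. R x y \<Longrightarrow> R x z \<Longrightarrow> y = z" and ab: "R\<^sup>*\<^sup>* a b" and stuck: "\<And>c. \<not> R b c"
  shows "R\<^sup>*\<^sup>* a c \<Longrightarrow> R\<^sup>*\<^sup>* c b"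
proof (induction rule: rtranclp_induct)
  case base then show ?case by (rule ab)
next
  case (step c' c)
  from step.IH have "c' = b \<or> (\<exists>d. R c' d \<and> R\<^sup>*\<^sup>* d b)"
    by (metis converse_rtranclpE)
  then show ?case using step.hyps(2) stuck det by metis
qed

lemma stuck_reach: "R\<^sup>*\<^sup>* c b \<Longrightarrow> (\<And>d. \<not> R c d) \<Longrightarrow> c = b"
  by (metis converse_rtranclpE)


definition W2 where "W2 = Cn 2 S [PE]"
lemma eval_W2: "eval W2 [x, y] (Suc (prod_encode (x, y)))"
  unfolding W2_def by (rule eval_Cn1[OF eval_PE]) (auto intro: eval_S)

definition WR where "WR u v = Cn 1 W2 [u, v]"
lemma eval_WR: "eval u [m] x \<Longrightarrow> eval v [m] y \<Longrightarrow> eval (WR u v) [m] (Suc (prod_encode (x, y)))"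
  unfolding WR_def by (rule eval_Cn2) (auto intro: eval_W2)

fun SNDn :: "nat \<Rightarrow> recf" where
  "SNDn 0 = Id 1 0"
| "SNDn (Suc k) = Cn 1 SND [SNDn k]"

lemma SNDn_eq: "SNDn (k + 1) = Cn 1 SND [SNDn k]" by simp

definition Dj where "Dj j = Cn 1 FST [SNDn j]"

definition K3 where "K3 = Cn 1 S [Cn 1 S [Cn 1 S [Z]]]"
lemma eval_K3: "eval K3 [m] 3"
  unfolding K3_def
  by (auto intro!: eval_Cn1 eval_Z eval_S simp: numeral_3_eq_3)

definition EE where "EE = Pr 0 (Cn 0 S [Cn 0 S [Cn 0 S [Z]]]) (Cn 2 W2 [Z, Id 2 1])"

lemma eval_EE: "eval EE [n] (list_encode (replicate n 0 @ [1]))"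
proof (induction n)
  case 0
  have "list_encode [1] = 3" by (simp add: prod_encode_def numeral_3_eq_3)
  then show ?case unfolding EE_def
    by (auto intro!: eval_Pr0 eval_Cn1 eval_Z eval_S simp: numeral_3_eq_3)
next
  case (Suc n)
  have "eval (Cn 2 W2 [Z, Id 2 1]) [n, list_encode (replicate n 0 @ [1])]
          (Suc (prod_encode (0, list_encode (replicate n 0 @ [1]))))"
    by (rule eval_Cn2) (auto intro: eval_Z eval_Idv eval_W2)
  then show ?case using Suc unfolding EE_def by (auto intro: eval_PrS)
qed

definition SIG where
  "SIG = WR (Dj 0) (WR (Dj 1) (WR (Dj 2) (WR (Dj 3) (WR (Dj 4) (WR (Dj 5)
           (WR Z (WR (WR Z (WR K3 (WR EE (Dj 6)))) (SNDn 7))))))))"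

definition code8 where
  "code8 a1 a2 a3 a4 a5 a6 r t = prod_encode (a1, prod_encode (a2, prod_encode (a3, prod_encode (a4,
     prod_encode (a5, prod_encode (a6, prod_encode (r, t)))))))"

lemma eval_SND': "eval u [m] (prod_encode (x, y)) \<Longrightarrow> eval (Cn 1 SND [u]) [m] y"
  by (rule eval_Cn1) (auto intro: eval_SND)

lemma eval_Dj': "eval (SNDn j) [m] (prod_encode (x, y)) \<Longrightarrow> eval (Dj j) [m] x"
  unfolding Dj_def by (rule eval_Cn1) (auto intro: eval_FST)

lemma eval_SIG:
  assumes m: "m = code8 a1 a2 a3 a4 a5 a6 (list_encode rs) (list_encode tls)"
  shows "eval SIG [m] (list_encode ([a1, a2, a3, a4, a5, a6, 0,
      list_encode (0 # 3 # list_encode (replicate m 0 @ [1]) # rs)] @ tls))"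
proof -
  define x6 where "x6 = prod_encode (list_encode rs, list_encode tls)"
  define x5 where "x5 = prod_encode (a6, x6)"
  define x4 where "x4 = prod_encode (a5, x5)"
  define x3 where "x3 = prod_encode (a4, x4)"
  define x2 where "x2 = prod_encode (a3, x3)"
  define x1 where "x1 = prod_encode (a2, x2)"
  have m': "m = prod_encode (a1, x1)" using m by (simp add: code8_def x1_def x2_def x3_def x4_def x5_def x6_def)
  have s0: "eval (SNDn 0) [m] (prod_encode (a1, x1))" using m' by (auto intro: eval_Idv)
  have s1: "eval (SNDn 1) [m] (prod_encode (a2, x2))" using eval_SND'[OF s0] by (simp add: x1_def)
  have s2: "eval (SNDn 2) [m] (prod_encode (a3, x3))" using eval_SND'[OF s1] by (simp add: x2_def numeral_2_eq_2)
  have s3: "eval (SNDn 3) [m] (prod_encode (a4, x4))" using eval_SND'[OF s2] by (simp add: x3_def SNDn_eq[of 2, simplified])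
  have s4: "eval (SNDn 4) [m] (prod_encode (a5, x5))" using eval_SND'[OF s3] by (simp add: x4_def SNDn_eq[of 3, simplified])
  have s5: "eval (SNDn 5) [m] (prod_encode (a6, x6))" using eval_SND'[OF s4] by (simp add: x5_def SNDn_eq[of 4, simplified])
  have s6: "eval (SNDn 6) [m] (prod_encode (list_encode rs, list_encode tls))" using eval_SND'[OF s5] by (simp add: x6_def SNDn_eq[of 5, simplified])
  have s7: "eval (SNDn 7) [m] (list_encode tls)" using eval_SND'[OF s6] by (simp add: SNDn_eq[of 6, simplified])
  have V: "eval (WR Z (WR K3 (WR EE (Dj 6)))) [m] (list_encode (0 # 3 # list_encode (replicate m 0 @ [1]) # rs))"
    unfolding list_encode.simps by (intro eval_WR eval_Z eval_K3 eval_EE eval_Dj'[OF s6])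
  show ?thesis unfolding SIG_def append_Cons append_Nil list_encode.simps
    by (intro eval_WR eval_Z V s7 eval_Dj'[OF s0] eval_Dj'[OF s1] eval_Dj'[OF s2]
        eval_Dj'[OF s3] eval_Dj'[OF s4] eval_Dj'[OF s5] eval_K3 eval_EE eval_Dj'[OF s6])
qed


lemma flat_shape: "t \<in> flat P e x \<Longrightarrow> \<exists>q c a c' a' q'. t = (q, c, Some a, c', a', q') \<and>
   e \<le> q \<and> q < e + psize P \<and> ((e \<le> q' \<and> q' < e + psize P) \<or> q' = x) \<and> a \<le> 2 \<and>
   (a' = None \<or> a' = Some 0 \<or> a' = Some 1) \<and> c < regs P + 2 \<and> c' < regs P + 2 \<and>
   ((c = 0 \<and> a = 2 \<and> c' \<noteq> 0) \<or> (c \<noteq> 0 \<and> c' = c))"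
proof (induction P arbitrary: e x t)
  case Skip then show ?case by auto
next
  case (Inc r) then show ?case by auto
next
  case (Seq P Q)
  from Seq.prems have "t \<in> flat P e (e + psize P) \<or> t \<in> flat Q (e + psize P) x" by simp
  then show ?case
  proof
    assume "t \<in> flat P e (e + psize P)"
    from Seq.IH(1)[OF this] show ?case using psize_pos[of Q] by fastforce
  next
    assume "t \<in> flat Q (e + psize P) x"
    from Seq.IH(2)[OF this] show ?case using psize_pos[of P] by fastforce
  qed
next
  case (Loop r P)
  from Loop.prems consider "t = (e, r+2, Some 0, r+2, None, Suc e)" | "t = (e, r+2, Some 1, r+2, Some 1, x)"
     | "t \<in> flat P (Suc e) e" by auto
  then show ?case
  proof cases
    case 3
    from Loop.IH[OF this] show ?thesis by fastforce
  qed (auto simp: psize_pos)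
qed

definition prj :: "nat \<times> valuation \<Rightarrow> nat \<times> valuation" where
  "prj C = (fst C, (snd C)(0 := []))"

definition shape :: "trans set \<Rightarrow> bool" where
  "shape D \<longleftrightarrow> (\<forall>q c a c' a' q'. (q, c, a, c', a', q') \<in> D \<longrightarrow>
     (a = None \<and> c = 0 \<and> c' = 0 \<and> a' = Some 2 \<and> q' = q) \<or> (c = 0 \<and> a = Some 2 \<and> c' \<noteq> 0) \<or>
     (c \<noteq> 0 \<and> c' = c \<and> a \<noteq> None))"

lemma proj: assumes sh: "shape D" and st: "step D C C'"
  shows "prj C = prj C' \<or> rstep D (prj C) (prj C')"
proof -
  obtain q \<nu> q' \<nu>' where C: "C = (q, \<nu>)" "C' = (q', \<nu>')" by (cases C, cases C')
  from st obtain c a c' a' w where t: "(q, c, a, c', a', q') \<in> D" "\<nu> c = opt_word a @ w"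
    "\<nu>' = (if c = c' then \<nu>(c := w @ opt_word a') else \<nu>(c := w, c' := \<nu> c' @ opt_word a'))"
    unfolding step_def C by auto
  from sh t(1) have "(a = None \<and> c = 0 \<and> c' = 0 \<and> a' = Some 2 \<and> q' = q) \<or> (c = 0 \<and> a = Some 2 \<and> c' \<noteq> 0) \<or>
     (c \<noteq> 0 \<and> c' = c \<and> a \<noteq> None)" unfolding shape_def by blast
  then consider "a = None" "c = 0" "c' = 0" "a' = Some 2" "q' = q" | "c = 0" "a = Some 2" "c' \<noteq> 0"
    | b where "c \<noteq> 0" "c' = c" "a = Some b" by auto
  then show ?thesis
  proof cases
    case 1 then show ?thesis using t C by (auto simp: prj_def)
  next
    case 2
    have "rstep D (q, \<nu>(0 := [])) (q', \<nu>(0 := [], c' := \<nu> c' @ opt_word a'))"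
      unfolding rstep_def using t(1) 2 by (intro exI[of _ 0] exI[of _ 2] exI[of _ c'] exI[of _ a']) auto
    moreover have "\<nu>' (0 := []) = \<nu>(0 := [], c' := \<nu> c' @ opt_word a')"
      using t(3) 2 by (auto simp: fun_eq_iff)
    ultimately show ?thesis using C by (auto simp: prj_def)
  next
    case 3
    have "rstep D (q, \<nu>(0 := [])) (q', \<nu>(0 := [], c := w @ opt_word a'))"
      unfolding rstep_def using t(1,2) 3 by (intro exI[of _ c] exI[of _ b] exI[of _ c] exI[of _ a']) auto
    moreover have "\<nu>' (0 := []) = \<nu>(0 := [], c := w @ opt_word a')"
      using t(3) 3 by (auto simp: fun_eq_iff)
    ultimately show ?thesis using C by (auto simp: prj_def)
  qed
qed

lemma projs: assumes sh: "shape D" shows "(step D)\<^sup>*\<^sup>* C C' \<Longrightarrow> (rstep D)\<^sup>*\<^sup>* (prj C) (prj C')"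
proof (induction rule: rtranclp_induct)
  case (step y z)
  from proj[OF sh step.hyps(2)] step.IH show ?case by (metis rtranclp.rtrancl_into_rtrancl)
qed simp

lemma fwd: assumes inj: "\<forall>q c a c' a' q'. (q, c, a, c', a', q') \<in> D \<longrightarrow> (q, 0, None, 0, Some 2, q) \<in> D"
  and r: "rstep D C C'" and e: "snd C 0 = []"
  shows "(step D)\<^sup>*\<^sup>* C C' \<and> snd C' 0 = []"
proof -
  obtain q \<nu> q' \<nu>' where C: "C = (q, \<nu>)" "C' = (q', \<nu>')" by (cases C, cases C')
  from r obtain c a c' a' where t: "(q, c, Some a, c', a', q') \<in> D"
    "(c = 0 \<and> a = 2 \<and> c' \<noteq> 0 \<and> \<nu>' = \<nu>(c' := \<nu> c' @ opt_word a')) \<or>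
     (c \<noteq> 0 \<and> c' = c \<and> (\<exists>w. \<nu> c = a # w \<and> \<nu>' = \<nu>(c := w @ opt_word a')))"
    unfolding rstep_def C by auto
  have e': "\<nu> 0 = []" using e C by simp
  from t(2) show ?thesis
  proof
    assume h: "c = 0 \<and> a = 2 \<and> c' \<noteq> 0 \<and> \<nu>' = \<nu>(c' := \<nu> c' @ opt_word a')"
    have i: "(q, 0, None, 0, Some 2, q) \<in> D" using inj t(1) by blast
    have s1: "step D (q, \<nu>) (q, \<nu>(0 := [2]))"
      unfolding step_def using i e' by (intro exI[of _ 0] exI[of _ None] exI[of _ 0] exI[of _ "Some 2"] exI[of _ "[]"]) auto
    have s2: "step D (q, \<nu>(0 := [2])) (q', \<nu>')"
      unfolding step_def using t(1) h e'
      by (intro exI[of _ 0] exI[of _ "Some 2"] exI[of _ c'] exI[of _ a'] exI[of _ "[]"]) (auto simp: fun_eq_iff)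
    show ?thesis using s1 s2 h e' C by auto
  next
    assume h: "c \<noteq> 0 \<and> c' = c \<and> (\<exists>w. \<nu> c = a # w \<and> \<nu>' = \<nu>(c := w @ opt_word a'))"
    then obtain w where w: "\<nu> c = a # w" "\<nu>' = \<nu>(c := w @ opt_word a')" by auto
    have "step D (q, \<nu>) (q', \<nu>')"
      unfolding step_def using t(1) h w by (intro exI[of _ c] exI[of _ "Some a"] exI[of _ c] exI[of _ a'] exI[of _ w]) auto
    then show ?thesis using C h w e' by auto
  qed
qed

lemma fwds: assumes inj: "\<forall>q c a c' a' q'. (q, c, a, c', a', q') \<in> D \<longrightarrow> (q, 0, None, 0, Some 2, q) \<in> D"
  shows "(rstep D)\<^sup>*\<^sup>* C C' \<Longrightarrow> snd C 0 = [] \<Longrightarrow> (step D)\<^sup>*\<^sup>* C C' \<and> snd C' 0 = []"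
proof (induction rule: rtranclp_induct)
  case (step y z)
  then have "(step D)\<^sup>*\<^sup>* C y" "snd y 0 = []" by auto
  with fwd[OF inj step.hyps(2)] show ?case by auto
qed simp


theorem proposition6:
  shows "\<not> (\<exists>f. decides_pOCS_reach f)"
proof
  assume "\<exists>f. decides_pOCS_reach f"
  then obtain f where dec: "decides_pOCS_reach f" ..
  define h where "h = Cn 1 f [SIG]"
  define P0 where "P0 = Seq (compile h 1 0) (clear 0)"
  define NR where "NR = max 2 (regs P0)"
  define T where "T = psize P0"
  define Dt :: "trans set" where "Dt = {(T, 3, Some 0, 3, None, Suc T), (T, 3, Some 1, 3, Some 1, Suc (Suc T))}"
  define Di :: "trans set" where "Di = {(q, 0, None, 0, Some 2, q) | q. q < T + 3}"
  define Dl where "Dl = flat P0 0 T \<union> Dt \<union> Di"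
  define Q where "Q = {0..<T+3}"
  define Ch where "Ch = {0..<NR+2}"
  define Sig where "Sig = {0, 1, 2::nat}"
  define sm where "sm m = (\<lambda>r::nat. if r = 0 then m else (0::nat))" for m
  define C0 where "C0 m = (0::nat, encv NR (sm m))" for m
  define Cf where "Cf = (Suc (Suc T), encv NR (\<lambda>_. 0))"
  define Rs where "Rs = map (\<lambda>c. list_encode (encv NR (\<lambda>_. 0) c)) [3..<NR+2]"
  define tls where "tls = [Suc (Suc T), enc_val Ch (encv NR (\<lambda>_. 0))]"
  define m0 where "m0 = code8 (enc_set Q) (enc_set Ch) 0 (enc_set Sig) 2 (enc_delta Dl) (list_encode Rs) (list_encode tls)"
  have NR2: "2 \<le> NR" and regsP: "regs P0 \<le> NR" by (auto simp: NR_def)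
  have shapeF: "\<And>t. t \<in> flat P0 0 T \<Longrightarrow> \<exists>q c a c' a' q'. t = (q, c, Some a, c', a', q') \<and>
   q < T \<and> (q' < T \<or> q' = T) \<and> a \<le> 2 \<and>
   (a' = None \<or> a' = Some 0 \<or> a' = Some 1) \<and> c < NR + 2 \<and> c' < NR + 2 \<and>
   ((c = 0 \<and> a = 2 \<and> c' \<noteq> 0) \<or> (c \<noteq> 0 \<and> c' = c))"
    using flat_shape[of _ P0 0 T] regsP unfolding T_def by fastforce
  have pocs: "is_pOCS Q Ch 0 Sig 2 Dl (\<lambda>_ _. 1)"
    unfolding is_pOCS_def
  proof (intro conjI)
    show "Dl \<subseteq> Q \<times> Ch \<times> insert None (Some ` Sig) \<times> Ch \<times> insert None (Some ` Sig) \<times> Q"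
    proof
      fix t assume "t \<in> Dl"
      then consider "t \<in> flat P0 0 T" | "t \<in> Dt" | "t \<in> Di" unfolding Dl_def by auto
      then show "t \<in> Q \<times> Ch \<times> insert None (Some ` Sig) \<times> Ch \<times> insert None (Some ` Sig) \<times> Q"
      proof cases
        case 1 then show ?thesis using shapeF[OF 1] by (auto simp: Q_def Ch_def Sig_def)
      qed (use NR2 in \<open>auto simp: Dt_def Di_def Q_def Ch_def Sig_def\<close>)
    qed
    show "\<forall>q\<in>Q. (q, 0, None, 0, Some 2, q) \<in> Dl" by (auto simp: Q_def Dl_def Di_def)
    show "\<forall>(q, c, a, c', a', q')\<in>Dl. a = None \<longrightarrow> a' = Some 2 \<and> c = 0 \<and> c' = 0"
      using shapeF by (fastforce simp: Dl_def Dt_def Di_def)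
    show "\<forall>(q, c, a, c', a', q')\<in>Dl. c \<noteq> 0 \<longrightarrow> c' \<noteq> 0"
      using shapeF by (fastforce simp: Dl_def Dt_def Di_def)
  qed (auto simp: Q_def Ch_def Sig_def)
  have cfg0: "is_config Q Ch Sig (C0 m)" for m
    unfolding is_config_def C0_def by (auto simp: Q_def Ch_def Sig_def encv_def)
  have cfgf: "is_config Q Ch Sig Cf"
    unfolding is_config_def Cf_def by (auto simp: Q_def Ch_def Sig_def encv_def)
  have l1: "list_encode [1] = 3" by (simp add: prod_encode_def numeral_3_eq_3)
  have upt: "[0..<NR+2] = 0 # 1 # 2 # [3..<NR+2]" using NR2 by (simp add: upt_conv_Cons numeral_3_eq_3 numeral_2_eq_2)
  have "map (\<lambda>c. list_encode (encv NR (sm m0) c)) [3..<NR+2] = Rs"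
    unfolding Rs_def by (rule map_cong) (auto simp: encv_def sm_def)
  then have ev0: "enc_val Ch (snd (C0 m0)) = list_encode (0 # 3 # list_encode (replicate m0 0 @ [1]) # Rs)"
    unfolding enc_val_def C0_def Ch_def sorted_list_of_set_range upt
    using l1 NR2 by (simp add: encv_def sm_def)
  have encq: "enc_instance Q Ch 0 Sig 2 Dl (C0 m0) Cf = list_encode ([enc_set Q, enc_set Ch, 0, enc_set Sig, 2,
      enc_delta Dl, 0, list_encode (0 # 3 # list_encode (replicate m0 0 @ [1]) # Rs)] @ tls)"
    unfolding enc_instance_def ev0 by (simp add: tls_def Cf_def C0_def)
  have evS: "eval SIG [m0] (enc_instance Q Ch 0 Sig 2 Dl (C0 m0) Cf)"
    unfolding encq by (rule eval_SIG) (simp add: m0_def)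
  define r where "r = (if reachable Dl (C0 m0) Cf then 1 else (0::nat))"
  have evf: "eval f [enc_instance Q Ch 0 Sig 2 Dl (C0 m0) Cf] r"
    using dec pocs cfg0 cfgf unfolding decides_pOCS_reach_def r_def by blast
  have evh: "eval h [m0] r" unfolding h_def by (rule eval_Cn1[OF evS evf]) simp
  have "pre [m0] 0 (sm m0)" by (auto simp: pre_def sm_def)
  then have "bigstep (compile h (length [m0]) 0) (sm m0) ((sm m0)(0 + length [m0] := r))"
    using corr_all[of h] evh unfolding corr_def by blast
  then have bh: "bigstep (compile h 1 0) (sm m0) ((sm m0)(1 := r))" by simp
  define sfin where "sfin = (\<lambda>q::nat. if q = 1 then r else 0)"
  have "bigstep P0 (sm m0) sfin"
    unfolding P0_def by (rule bs_Seq[OF bh], rule bs_eq[OF bs_clear]) (auto simp: sfin_def sm_def fun_eq_iff)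
  from sim[OF this regsP, of 0 T]
  have run1: "(rstep Dl)\<^sup>*\<^sup>* (C0 m0) (T, encv NR sfin)"
    unfolding C0_def by (rule rsteps_mono[rotated]) (auto simp: Dl_def)
  have shD: "shape Dl"
    unfolding shape_def
  proof (intro allI impI)
    fix q c a c' a' q' assume "(q, c, a, c', a', q') \<in> Dl"
    then consider "(q, c, a, c', a', q') \<in> flat P0 0 T" | "(q, c, a, c', a', q') \<in> Dt"
      | "(q, c, a, c', a', q') \<in> Di" unfolding Dl_def by auto
    then show "(a = None \<and> c = 0 \<and> c' = 0 \<and> a' = Some 2 \<and> q' = q) \<or> (c = 0 \<and> a = Some 2 \<and> c' \<noteq> 0) \<or>
     (c \<noteq> 0 \<and> c' = c \<and> a \<noteq> None)"
    proof cases
      case 1 then show ?thesis using shapeF[OF 1] by auto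
    qed (auto simp: Dt_def Di_def)
  qed
  have injD: "\<forall>q c a c' a' q'. (q, c, a, c', a', q') \<in> Dl \<longrightarrow> (q, 0, None, 0, Some 2, q) \<in> Dl"
  proof (intro allI impI)
    fix q c a c' a' q' assume "(q, c, a, c', a', q') \<in> Dl"
    then consider "(q, c, a, c', a', q') \<in> flat P0 0 T" | "(q, c, a, c', a', q') \<in> Dt"
      | "(q, c, a, c', a', q') \<in> Di" unfolding Dl_def by auto
    then have "q < T + 3"
    proof cases
      case 1 then show ?thesis using shapeF[OF 1] by auto
    qed (auto simp: Dt_def Di_def)
    then show "(q, 0, None, 0, Some 2, q) \<in> Dl" by (auto simp: Dl_def Di_def)
  qed
  have srcF: "\<forall>t\<in>flat P0 0 T. fst t \<in> {0..<T}" using flat_props[of P0 0 T] by (auto simp: T_def)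
  have "detD (flat P0 0 T \<union> Dt)"
    by (rule detD_Un[OF _ _ srcF, of Dt "{T}"]) (use flat_props[of P0 0 T] in \<open>auto simp: Dt_def detD_def\<close>)
  then have detl: "detD Dl" unfolding Dl_def detD_def Di_def by blast
  have stuck: "\<not> rstep Dl (q, \<nu>) C'" if "q = Suc T \<or> q = Suc (Suc T)" for q \<nu> C'
  proof
    assume "rstep Dl (q, \<nu>) C'"
    then obtain c a c' a' where "(q, c, Some a, c', a', fst C') \<in> Dl" unfolding rstep_def by auto
    then consider "(q, c, Some a, c', a', fst C') \<in> flat P0 0 T" | "(q, c, Some a, c', a', fst C') \<in> Dt"
      | "(q, c, Some a, c', a', fst C') \<in> Di" unfolding Dl_def by auto
    then show False
    proof cases
      case 1 then show ?thesis using shapeF[OF 1] that by auto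
    qed (use that in \<open>auto simp: Dt_def Di_def\<close>)
  qed
  have rdet: "\<And>x y z. rstep Dl x y \<Longrightarrow> rstep Dl x z \<Longrightarrow> y = z" using rstep_det[OF detl] by blast
  have prjC0: "prj (C0 m0) = C0 m0" and prjCf: "prj Cf = Cf"
    by (auto simp: prj_def C0_def Cf_def encv_def fun_eq_iff)
  show False
  proof (cases "reachable Dl (C0 m0) Cf")
    case True
    then have r1: "r = 1" by (simp add: r_def)
    define B where "B = (Suc T, (encv NR sfin)(3 := [1]))"
    have "encv NR sfin 3 = [0, 1]" using NR2 r1 by (simp add: encv_def sfin_def)
    moreover have mem: "(T, 3, Some 0, 3, None, Suc T) \<in> Dl" by (simp add: Dl_def Dt_def)
    ultimately have "rstep Dl (T, encv NR sfin) B"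
      unfolding B_def by (intro rstep_read[OF mem]) auto
    then have runB: "(rstep Dl)\<^sup>*\<^sup>* (C0 m0) B" by (rule rtranclp.rtrancl_into_rtrancl[OF run1])
    have "(step Dl)\<^sup>*\<^sup>* (C0 m0) Cf" using True unfolding reachable_def .
    from projs[OF shD this] have "(rstep Dl)\<^sup>*\<^sup>* (C0 m0) Cf" unfolding prjC0 prjCf .
    moreover have stB: "\<And>c. \<not> rstep Dl B c" unfolding B_def by (rule stuck) simp
    ultimately have "(rstep Dl)\<^sup>*\<^sup>* Cf B"
      apply -
      apply (rule det_reach[of "rstep Dl" "C0 m0" B Cf])
      using rdet runB by blast+
    moreover have stf: "\<And>c. \<not> rstep Dl Cf c" unfolding Cf_def by (rule stuck) simp
    ultimately have "Cf = B" by (rule stuck_reach)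
    then show False by (simp add: Cf_def B_def)
  next
    case False
    then have r0: "r = 0" by (simp add: r_def)
    have sf0: "sfin = (\<lambda>_. 0)" using r0 by (auto simp: sfin_def fun_eq_iff)
    have e3: "encv NR sfin 3 = [1]" using NR2 r0 by (simp add: encv_def sfin_def)
    have mem: "(T, 3, Some 1, 3, Some 1, Suc (Suc T)) \<in> Dl" by (simp add: Dl_def Dt_def)
    have "rstep Dl (T, encv NR sfin) (Suc (Suc T), (encv NR sfin)(3 := [] @ opt_word (Some 1)))"
      by (rule rstep_read[OF mem]) (use e3 in auto)
    moreover have "(encv NR sfin)(3 := [] @ opt_word (Some 1)) = encv NR sfin" using e3 by auto
    ultimately have "rstep Dl (T, encv NR sfin) Cf" unfolding Cf_def sf0 by simp
    then have "(rstep Dl)\<^sup>*\<^sup>* (C0 m0) Cf" by (rule rtranclp.rtrancl_into_rtrancl[OF run1])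
    moreover have "snd (C0 m0) 0 = []" by (simp add: C0_def encv_def)
    ultimately have "(step Dl)\<^sup>*\<^sup>* (C0 m0) Cf" using fwds[OF injD] by blast
    then show False using False unfolding reachable_def by simp
  qed
qed

end
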